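(* Let $0<\epsilon\le1$ and suppose $L^*\ge\frac{1}{\epsilon^3}\log T$. Let $\sigma_{temp}$ be the random tentative schedule defined below. Then for any interval $I=[t_1,t_2]\subseteq[1,T]$, $\Pr[OF(I)\ge 6\epsilon L^*]\le 1/T^3$.
   Context: Broadcast scheduling with maximum flow time: a set $\mathcal{P}$ of unit-sized pages, requests $\rho$ with integer release time $r_\rho\ge0$ and page $p_\rho$; $L^*$ is the optimal maximum flow time; $T=\max_\rho r_\rho+n$ is the time horizon ($n=|\mathcal{P}|$); $\log$ is natural. Assume any two requests for the same page with no request for that page released strictly between them have release times differing by at most $L^*-1$. For page $p$ let $\mathcal{T}_p$ be the set of release times of requests for $p$ and $W_p=[\min\mathcal{T}_p+1,\max\mathcal{T}_p+L^*]$. Let $x^*=(x^*_{p,t})_{p\in\mathcal{P},t\in[T]}$ be a feasible solution of the linear program: $\sum_{t'=t+1}^{t+L^*}x_{p,t'}\ge1$ for all $p$ and $t\in\mathcal{T}_p$; $\sum_{p}x_{p,t}\le1$ for all $t\in[T]$; $x_{p,t}=0$ for $t\notin W_p$; $x_{p,t}\ge0$. Let $\mathcal{G}$ be a partition of $\mathcal{P}$ into at most $2L^*$ groups such that distinct pages in the same group have disjoint windows $W_p$. For each group $g$ let $y^*_{g,t}=\sum_{p\in g}\sum_{t'\le t}x^*_{p,t'}$, and choose $\alpha_g$ uniformly at random from $[0,1]$, independently over groups. The tentative schedule $\sigma_{temp}$ (which may transmit several pages at one time) does the following for each group $g$: at every time $t$ such that $y^*_{g,t-1}<k+\alpha_g\le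 y^*_{g,t}$ for some integer $k$, it transmits the (unique) page $p\in g$ with $x^*_{p,t}>0$. Let $Q_{temp}(I)$ be the number of transmissions made by $\sigma_{temp}$ during $I$, and $OF([t_1,t_2]):=\max\{Q_{temp}([t_1,t_2])-(t_2-t_1+1),0\}$. *)

theory Defs
  imports "HOL-Probability.Probability"
begin

text \<open>A (broadcast) schedule transmits at most one page per time slot: sigma :: nat => 'p option.
  A request rho is served at the first transmission of pg rho at a time t > rel rho; its flow
  time is t - rel rho. Hence the maximum flow time of sigma is at most L iff every request
  is served within L steps.\<close>

definition opt_max_flow :: "'r set \<Rightarrow> ('r \<Rightarrow> nat) \<Rightarrow> ('r \<Rightarrow> 'p) \<Rightarrow> nat" where
  "opt_max_flow Req rel pg =
     (LEAST L. \<exists>\<sigma> :: nat \<Rightarrow> 'p option. \<forall>\<rho>\<in>Req.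
        \<exists>t. rel \<rho> < t \<and> t \<le> rel \<rho> + L \<and> \<sigma> t = Some (pg \<rho>))"

definition horizon :: "'p set \<Rightarrow> 'r set \<Rightarrow> ('r \<Rightarrow> nat) \<Rightarrow> nat" where
  "horizon P Req rel = (if Req = {} then 0 else Max (rel ` Req)) + card P"

definition rel_times :: "'r set \<Rightarrow> ('r \<Rightarrow> nat) \<Rightarrow> ('r \<Rightarrow> 'p) \<Rightarrow> 'p \<Rightarrow> nat set" where
  "rel_times Req rel pg p = {rel \<rho> | \<rho>. \<rho> \<in> Req \<and> pg \<rho> = p}"

definition window :: "'r set \<Rightarrow> ('r \<Rightarrow> nat) \<Rightarrow> ('r \<Rightarrow> 'p) \<Rightarrow> nat \<Rightarrow> 'p \<Rightarrow> nat set" where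
  "window Req rel pg L p =
     (if rel_times Req rel pg p = {} then {}
      else {Min (rel_times Req rel pg p) + 1 .. Max (rel_times Req rel pg p) + L})"

definition lp_feasible ::
  "'p set \<Rightarrow> 'r set \<Rightarrow> ('r \<Rightarrow> nat) \<Rightarrow> ('r \<Rightarrow> 'p) \<Rightarrow> nat \<Rightarrow> nat \<Rightarrow> ('p \<Rightarrow> nat \<Rightarrow> real) \<Rightarrow> bool" where
  "lp_feasible P Req rel pg L T x \<longleftrightarrow>
     (\<forall>p\<in>P. \<forall>t\<in>rel_times Req rel pg p. (\<Sum>t'\<in>{t+1..t+L} \<inter> {1..T}. x p t') \<ge> 1) \<and>
     (\<forall>t\<in>{1..T}. (\<Sum>p\<in>P. x p t) \<le> 1) \<and>
     (\<forall>p\<in>P. \<forall>t\<in>{1..T}. t \<notin> window Req rel pg L p \<longrightarrow> x p t = 0) \<and>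
     (\<forall>p\<in>P. \<forall>t\<in>{1..T}. x p t \<ge> 0)"

definition y_cum :: "('p \<Rightarrow> nat \<Rightarrow> real) \<Rightarrow> 'p set \<Rightarrow> nat \<Rightarrow> real" where
  "y_cum x g t = (\<Sum>p\<in>g. \<Sum>t'\<in>{1..t}. x p t')"

definition tentative_schedule ::
  "'p set set \<Rightarrow> ('p \<Rightarrow> nat \<Rightarrow> real) \<Rightarrow> nat \<Rightarrow> ('p set \<Rightarrow> real) \<Rightarrow> ('p \<times> nat) set" where
  "tentative_schedule G x T \<alpha> =
     {(p, t). \<exists>g\<in>G. p \<in> g \<and> t \<in> {1..T} \<and> x p t > 0 \<and>
        (\<exists>k::int. y_cum x g (t - 1) < of_int k + \<alpha> g \<and> of_int k + \<alpha> g \<le> y_cum x g t)}"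

definition Q_temp ::
  "'p set set \<Rightarrow> ('p \<Rightarrow> nat \<Rightarrow> real) \<Rightarrow> nat \<Rightarrow> ('p set \<Rightarrow> real) \<Rightarrow> nat set \<Rightarrow> nat" where
  "Q_temp G x T \<alpha> I = card {(p, t) \<in> tentative_schedule G x T \<alpha>. t \<in> I}"

definition OF ::
  "'p set set \<Rightarrow> ('p \<Rightarrow> nat \<Rightarrow> real) \<Rightarrow> nat \<Rightarrow> ('p set \<Rightarrow> real) \<Rightarrow> nat \<Rightarrow> nat \<Rightarrow> real" where
  "OF G x T \<alpha> t1 t2 = max (real (Q_temp G x T \<alpha> {t1..t2}) - (real t2 - real t1 + 1)) 0"

end

theory Submission
  imports Defs
begin


lemma y_mono:
  assumes fin: "finite g" and nonneg: "\<forall>p\<in>g. \<forall>t\<in>{1..T}. x p t \<ge> (0::real)"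
    and "s \<le> s'" and "s' \<le> T"
  shows "y_cum x g s \<le> y_cum x g s'"
  unfolding y_cum_def
proof (rule sum_mono)
  fix p assume p: "p \<in> g"
  show "(\<Sum>t'\<in>{1..s}. x p t') \<le> (\<Sum>t'\<in>{1..s'}. x p t')"
    by (rule sum_mono2) (use assms p in auto)
qed

lemma floor_shift:
  assumes "0 \<le> a" "a \<le> (1::real)"
  shows "\<lfloor>c - a\<rfloor> = \<lfloor>c\<rfloor> - (if c - of_int \<lfloor>c\<rfloor> < a then 1 else 0)"
proof -
  have f: "of_int \<lfloor>c\<rfloor> \<le> c" "c < of_int \<lfloor>c\<rfloor> + 1" by linarith+
  show ?thesis
  proof (cases "c - of_int \<lfloor>c\<rfloor> < a")
    case True
    then show ?thesis using f assms by (simp add: floor_eq_iff) linarith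
  next
    case False
    then show ?thesis using f assms by (simp add: floor_eq_iff) linarith
  qed
qed

lemma group_count:
  fixes x :: "'p \<Rightarrow> nat \<Rightarrow> real" and \<alpha> :: "'p set \<Rightarrow> real" and G :: "'p set set"
  assumes GP: "\<Union>G = P" and disj: "\<forall>g\<in>G. \<forall>g'\<in>G. g \<noteq> g' \<longrightarrow> g \<inter> g' = {}"
    and win: "\<forall>g\<in>G. \<forall>p\<in>g. \<forall>p'\<in>g. p \<noteq> p' \<longrightarrow> W p \<inter> W p' = {}"
    and zero: "\<forall>p\<in>P. \<forall>t\<in>{1..T}. t \<notin> W p \<longrightarrow> x p t = 0"
    and nonneg: "\<forall>p\<in>P. \<forall>t\<in>{1..T}. x p t \<ge> 0"
    and finP: "finite P"
    and g: "g \<in> G" and t1: "1 \<le> t1" "t1 \<le> t2" "t2 \<le> T"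
  shows "real (card {z \<in> tentative_schedule G x T \<alpha>. snd z \<in> {t1..t2} \<and> fst z \<in> g})
     \<le> of_int (\<lfloor>y_cum x g t2 - \<alpha> g\<rfloor> - \<lfloor>y_cum x g (t1-1) - \<alpha> g\<rfloor>)"
proof -
  let ?y = "y_cum x g"
  let ?a = "\<alpha> g"
  define S where "S = {z \<in> tentative_schedule G x T \<alpha>. snd z \<in> {t1..t2} \<and> fst z \<in> g}"
  define K where "K = {\<lfloor>?y (t1-1) - ?a\<rfloor> + 1 .. \<lfloor>?y t2 - ?a\<rfloor>}"
  define cond where "cond = (\<lambda>t (k::int). ?y (t - 1) < of_int k + ?a \<and> of_int k + ?a \<le> ?y t)"
  define \<phi> :: "'p \<times> nat \<Rightarrow> int" where "\<phi> = (\<lambda>z. SOME k. cond (snd z) k)"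
  have gP: "g \<subseteq> P" using GP g by auto
  have fing: "finite g" using finP gP finite_subset by blast
  have nng: "\<forall>p\<in>g. \<forall>t\<in>{1..T}. x p t \<ge> 0" using nonneg gP by auto
  have mono: "\<And>s s'. s \<le> s' \<Longrightarrow> s' \<le> T \<Longrightarrow> ?y s \<le> ?y s'"
    using y_mono[OF fing nng] by blast
  have memS: "fst z \<in> g \<and> snd z \<in> {t1..t2} \<and> snd z \<in> {1..T} \<and> x (fst z) (snd z) > 0 \<and> cond (snd z) (\<phi> z)"
    if z: "z \<in> S" for z
  proof -
    obtain p t where zpt: "z = (p, t)" by force
    from z obtain g' where g': "g' \<in> G" "p \<in> g'" "t \<in> {1..T}" "x p t > 0"
      and ex: "\<exists>k::int. y_cum x g' (t - 1) < of_int k + \<alpha> g' \<and> of_int k + \<alpha> g' \<le> y_cum x g' t"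
      and pg: "p \<in> g" and tI: "t \<in> {t1..t2}"
      unfolding S_def tentative_schedule_def zpt by auto
    have "g' = g" using disj g g' pg by blast
    then have "\<exists>k. cond t k" using ex unfolding cond_def by simp
    then have "cond t (\<phi> z)" unfolding \<phi>_def zpt by (simp add: someI_ex)
    then show ?thesis using g' pg tI zpt by auto
  qed
  have inj: "inj_on \<phi> S"
  proof (rule inj_onI)
    fix z z' assume z: "z \<in> S" and z': "z' \<in> S" and eq: "\<phi> z = \<phi> z'"
    obtain p t where zpt: "z = (p, t)" by force
    obtain p' t' where zpt': "z' = (p', t')" by force
    have A: "p \<in> g" "t \<in> {1..T}" "x p t > 0" "cond t (\<phi> z)" using memS[OF z] zpt by auto
    have B: "p' \<in> g" "t' \<in> {1..T}" "x p' t' > 0" "cond t' (\<phi> z)" using memS[OF z'] zpt' eq by auto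
    have tt: "t = t'"
    proof (rule ccontr)
      assume "t \<noteq> t'"
      then consider "t < t'" | "t' < t" by linarith
      then show False
      proof cases
        case 1
        then have "?y t \<le> ?y (t' - 1)" using mono[of t "t'-1"] B(2) by auto
        then show False using A(4) B(4) unfolding cond_def by linarith
      next
        case 2
        then have "?y t' \<le> ?y (t - 1)" using mono[of t' "t-1"] A(2) by auto
        then show False using A(4) B(4) unfolding cond_def by linarith
      qed
    qed
    have "p = p'"
    proof (rule ccontr)
      assume ne: "p \<noteq> p'"
      have "t \<in> W p" using zero A gP by fastforce
      moreover have "t \<in> W p'" using zero B gP tt by fastforce
      ultimately show False using win g A(1) B(1) ne by blast
    qed
    then show "z = z'" using tt zpt zpt' by simp
  qed
  have img: "\<phi> ` S \<subseteq> K"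
  proof
    fix k assume "k \<in> \<phi> ` S"
    then obtain z where z: "z \<in> S" and k: "k = \<phi> z" by blast
    obtain p t where zpt: "z = (p, t)" by force
    have A: "t \<in> {t1..t2}" "t \<in> {1..T}" "cond t k" using memS[OF z] zpt k by auto
    have "?y (t1 - 1) \<le> ?y (t - 1)" using mono[of "t1-1" "t-1"] A by auto
    then have l: "?y (t1 - 1) - ?a < of_int k" using A(3) unfolding cond_def by linarith
    have "?y t \<le> ?y t2" using mono[of t t2] A t1 by auto
    then have u: "of_int k \<le> ?y t2 - ?a" using A(3) unfolding cond_def by linarith
    have l': "\<lfloor>?y (t1 - 1) - ?a\<rfloor> < k" using l by (simp add: floor_less_iff)
    have u': "k \<le> \<lfloor>?y t2 - ?a\<rfloor>" using u by (simp add: le_floor_iff)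
    from l' u' show "k \<in> K" unfolding K_def by auto
  qed
  have "card S \<le> card K"
    using card_inj_on_le[OF inj img] K_def by simp
  also have "card K = nat (\<lfloor>?y t2 - ?a\<rfloor> - \<lfloor>?y (t1-1) - ?a\<rfloor>)"
    unfolding K_def by simp
  finally have c: "card S \<le> nat (\<lfloor>?y t2 - ?a\<rfloor> - \<lfloor>?y (t1-1) - ?a\<rfloor>)" .
  have "?y (t1 - 1) \<le> ?y t2" using mono t1 by auto
  then have "\<lfloor>?y (t1-1) - ?a\<rfloor> \<le> \<lfloor>?y t2 - ?a\<rfloor>" by (intro floor_mono) linarith
  then show ?thesis using c unfolding S_def
    by (metis (no_types, lifting) diff_ge_0_iff_ge of_int_of_nat_eq of_nat_mono
        of_int_le_iff int_nat_eq nat_le_iff) 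
qed



lemma measure_U_Ioi:
  assumes "0 \<le> f" "f < (1::real)"
  shows "measure (uniform_measure lborel {0..1::real}) {f<..} = 1 - f"
proof -
  have "{0..1::real} \<inter> {f<..} = {f<..1}" using assms by auto
  moreover have "emeasure lborel {0..1::real} \<noteq> 0" "emeasure lborel {0..1::real} \<noteq> \<infinity>" by simp_all
  ultimately show ?thesis using assms by (simp add: measure_def divide_ennreal_def)
qed

lemma expect_N:
  "(\<integral>a. real_of_int (\<lfloor>B - a\<rfloor> - \<lfloor>A - a\<rfloor>) \<partial>uniform_measure lborel {0..1::real}) = B - A"
proof -
  let ?U = "uniform_measure lborel {0..1::real}"
  interpret U: prob_space ?U by (rule prob_space_uniform_measure) simp_all
  define fA where "fA = A - of_int \<lfloor>A\<rfloor>"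
  define fB where "fB = B - of_int \<lfloor>B\<rfloor>"
  have fA: "0 \<le> fA" "fA < 1" unfolding fA_def by linarith+
  have fB: "0 \<le> fB" "fB < 1" unfolding fB_def by linarith+
  have AE: "AE a in ?U. a \<in> {0..1}"
    by (rule AE_uniform_measureI) auto
  have "AE a in ?U. real_of_int (\<lfloor>B - a\<rfloor> - \<lfloor>A - a\<rfloor>) =
      real_of_int (\<lfloor>B\<rfloor> - \<lfloor>A\<rfloor>) - indicator {fB<..} a + indicator {fA<..} a"
    using AE
  proof eventually_elim
    case (elim a)
    then show ?case
      using floor_shift[of a B] floor_shift[of a A] unfolding fA_def fB_def
      by (auto simp: indicator_def)
  qed
  note AE2 = this
  have "(\<integral>a. real_of_int (\<lfloor>B - a\<rfloor> - \<lfloor>A - a\<rfloor>) \<partial>?U) =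
      (\<integral>a. real_of_int (\<lfloor>B\<rfloor> - \<lfloor>A\<rfloor>) - indicator {fB<..} a + indicator {fA<..} a \<partial>?U)"
    by (rule integral_cong_AE[OF _ _ AE2]) measurable
  also have "\<dots> = real_of_int (\<lfloor>B\<rfloor> - \<lfloor>A\<rfloor>) - measure ?U {fB<..} + measure ?U {fA<..}"
  proof -
    have ind: "integrable ?U (indicator S :: real \<Rightarrow> real)" if "S \<in> sets borel" for S
      apply (rule integrable_real_indicator) using that apply simp
      using U.emeasure_finite[of S] by (simp add: less_top[symmetric] del: emeasure_uniform_measure)
    have c: "integrable ?U (\<lambda>a. real_of_int (\<lfloor>B\<rfloor> - \<lfloor>A\<rfloor>))" by simp
    have i1: "integrable ?U (\<lambda>a. real_of_int (\<lfloor>B\<rfloor> - \<lfloor>A\<rfloor>) - indicator {fB<..} a)"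
      by (rule Bochner_Integration.integrable_diff[OF c ind]) simp
    have "(\<integral>a. real_of_int (\<lfloor>B\<rfloor> - \<lfloor>A\<rfloor>) - indicator {fB<..} a + indicator {fA<..} a \<partial>?U)
       = (\<integral>a. real_of_int (\<lfloor>B\<rfloor> - \<lfloor>A\<rfloor>) - indicator {fB<..} a \<partial>?U) + (\<integral>a. indicator {fA<..} a \<partial>?U)"
      by (rule Bochner_Integration.integral_add[OF i1 ind]) simp
    also have "(\<integral>a. real_of_int (\<lfloor>B\<rfloor> - \<lfloor>A\<rfloor>) - indicator {fB<..} a \<partial>?U)
       = (\<integral>a. real_of_int (\<lfloor>B\<rfloor> - \<lfloor>A\<rfloor>) \<partial>?U) - (\<integral>a. indicator {fB<..} a \<partial>?U)"
      by (rule Bochner_Integration.integral_diff[OF c ind]) simp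
    finally show ?thesis by (simp add: U.prob_space)
  qed
  also have "\<dots> = B - A"
    using measure_U_Ioi[OF fA] measure_U_Ioi[OF fB] unfolding fA_def fB_def by simp
  finally show ?thesis .
qed



lemma floor_diff_bounds:
  fixes u v :: real
  shows "\<lfloor>u - v\<rfloor> \<le> \<lfloor>u\<rfloor> - \<lfloor>v\<rfloor> \<and> \<lfloor>u\<rfloor> - \<lfloor>v\<rfloor> \<le> \<lfloor>u - v\<rfloor> + 1"
proof -
  have e: "\<lfloor>u\<rfloor> = (if frac v + frac (u - v) < 1 then \<lfloor>v\<rfloor> + \<lfloor>u - v\<rfloor> else (\<lfloor>v\<rfloor> + \<lfloor>u - v\<rfloor>) + 1)"
    using floor_add[of v "u - v"] by simp
  show ?thesis
  proof (cases "frac v + frac (u - v) < 1")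
    case True
    with e have "\<lfloor>u\<rfloor> = \<lfloor>v\<rfloor> + \<lfloor>u - v\<rfloor>" by simp
    then show ?thesis by linarith
  next
    case False
    with e have "\<lfloor>u\<rfloor> = \<lfloor>v\<rfloor> + \<lfloor>u - v\<rfloor> + 1" by simp
    then show ?thesis by linarith
  qed
qed

theorem lemma2p13:
  fixes P :: "'p set" and Req :: "'r set" and rel :: "'r \<Rightarrow> nat" and pg :: "'r \<Rightarrow> 'p"
    and Lstar :: nat and x :: "'p \<Rightarrow> nat \<Rightarrow> real" and G :: "'p set set"
    and \<epsilon> :: real and t1 t2 :: nat
  assumes "finite P" and "finite Req" and "\<forall>\<rho>\<in>Req. pg \<rho> \<in> P"
    and "Lstar = opt_max_flow Req rel pg"
    and "\<forall>\<rho>\<in>Req. \<forall>\<rho>'\<in>Req. pg \<rho> = pg \<rho>' \<and> rel \<rho> < rel \<rho>' \<and>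
           \<not> (\<exists>\<rho>''\<in>Req. pg \<rho>'' = pg \<rho> \<and> rel \<rho> < rel \<rho>'' \<and> rel \<rho>'' < rel \<rho>')
           \<longrightarrow> int (rel \<rho>') - int (rel \<rho>) \<le> int Lstar - 1"
    and "lp_feasible P Req rel pg Lstar (horizon P Req rel) x"
    and "\<Union>G = P" and "\<forall>g\<in>G. g \<noteq> {}"
    and "\<forall>g\<in>G. \<forall>g'\<in>G. g \<noteq> g' \<longrightarrow> g \<inter> g' = {}"
    and "card G \<le> 2 * Lstar"
    and "\<forall>g\<in>G. \<forall>p\<in>g. \<forall>p'\<in>g. p \<noteq> p' \<longrightarrow>
           window Req rel pg Lstar p \<inter> window Req rel pg Lstar p' = {}"
    and "0 < \<epsilon>" and "\<epsilon> \<le> 1"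
    and "real Lstar \<ge> 1 / \<epsilon> ^ 3 * ln (real (horizon P Req rel))"
    and "1 \<le> t1" and "t1 \<le> t2" and "t2 \<le> horizon P Req rel"
  shows "let M = PiM G (\<lambda>_. uniform_measure lborel {0..1::real});
             E = {\<alpha> \<in> space M. OF G x (horizon P Req rel) \<alpha> t1 t2 \<ge> 6 * \<epsilon> * real Lstar}
         in E \<in> sets M \<and> measure M E \<le> 1 / real (horizon P Req rel) ^ 3"
proof -
  note finP = assms(1) and GP = assms(7) and disj = assms(9) and cardG = assms(10)
    and win = assms(11) and eps = assms(12,13) and Lbig = assms(14) and tt = assms(15,16,17)
  define T where "T = horizon P Req rel"
  define U where "U = uniform_measure lborel {0..1::real}"
  define M where "M = PiM G (\<lambda>_. U)"
  define A where "A = (\<lambda>g. y_cum x g (t1 - 1))"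
  define B where "B = (\<lambda>g. y_cum x g t2)"
  define N where "N = (\<lambda>g a. real_of_int (\<lfloor>B g - a\<rfloor> - \<lfloor>A g - a\<rfloor>))"
  define sched where "sched = tentative_schedule G x T"
  define Ev where "Ev = {\<alpha> \<in> space M. OF G x T \<alpha> t1 t2 \<ge> 6 * \<epsilon> * real Lstar}"
  have lp: "\<forall>t\<in>{1..T}. (\<Sum>p\<in>P. x p t) \<le> 1"
    "\<forall>p\<in>P. \<forall>t\<in>{1..T}. t \<notin> window Req rel pg Lstar p \<longrightarrow> x p t = 0"
    "\<forall>p\<in>P. \<forall>t\<in>{1..T}. x p t \<ge> 0"
    using assms(6) unfolding lp_feasible_def T_def by auto
  have tt': "1 \<le> t1" "t1 \<le> t2" "t2 \<le> T" using tt T_def by auto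
  have finG: "finite G"
  proof -
    have "G \<subseteq> Pow P" using GP by auto
    then show ?thesis using finP by (meson finite_Pow_iff finite_subset)
  qed
  have Qbound: "real (Q_temp G x T \<alpha> {t1..t2}) \<le> (\<Sum>g\<in>G. N g (\<alpha> g))" for \<alpha>
  proof -
    have eq: "{(p, t) \<in> tentative_schedule G x T \<alpha>. t \<in> {t1..t2}} =
      (\<Union>g\<in>G. {z \<in> tentative_schedule G x T \<alpha>. snd z \<in> {t1..t2} \<and> fst z \<in> g})"
    proof (rule set_eqI)
      fix z :: "'p \<times> nat"
      obtain p t where z: "z = (p, t)" by force
      show "z \<in> {(p, t) \<in> tentative_schedule G x T \<alpha>. t \<in> {t1..t2}} \<longleftrightarrow>
        z \<in> (\<Union>g\<in>G. {z \<in> tentative_schedule G x T \<alpha>. snd z \<in> {t1..t2} \<and> fst z \<in> g})"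
      proof
        assume a: "z \<in> {(p, t) \<in> tentative_schedule G x T \<alpha>. t \<in> {t1..t2}}"
        then obtain g where "g \<in> G" "p \<in> g" unfolding z tentative_schedule_def by blast
        then show "z \<in> (\<Union>g\<in>G. {z \<in> tentative_schedule G x T \<alpha>. snd z \<in> {t1..t2} \<and> fst z \<in> g})"
          using a z by auto
      next
        assume "z \<in> (\<Union>g\<in>G. {z \<in> tentative_schedule G x T \<alpha>. snd z \<in> {t1..t2} \<and> fst z \<in> g})"
        then show "z \<in> {(p, t) \<in> tentative_schedule G x T \<alpha>. t \<in> {t1..t2}}" unfolding z by simp
      qed
    qed
    have "Q_temp G x T \<alpha> {t1..t2} \<le> (\<Sum>g\<in>G. card {z \<in> tentative_schedule G x T \<alpha>. snd z \<in> {t1..t2} \<and> fst z \<in> g})"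
      unfolding Q_temp_def eq by (rule card_UN_le[OF finG])
    then have "real (Q_temp G x T \<alpha> {t1..t2}) \<le> real (\<Sum>g\<in>G. card {z \<in> tentative_schedule G x T \<alpha>. snd z \<in> {t1..t2} \<and> fst z \<in> g})"
      by (rule of_nat_mono)
    also have "\<dots> = (\<Sum>g\<in>G. real (card {z \<in> tentative_schedule G x T \<alpha>. snd z \<in> {t1..t2} \<and> fst z \<in> g}))"
      by (rule of_nat_sum)
    also have "\<dots> \<le> (\<Sum>g\<in>G. N g (\<alpha> g))"
    proof (rule sum_mono)
      fix g assume g: "g \<in> G"
      show "real (card {z \<in> tentative_schedule G x T \<alpha>. snd z \<in> {t1..t2} \<and> fst z \<in> g}) \<le> N g (\<alpha> g)"
        using group_count[OF GP disj win lp(2) lp(3) finP g tt'] unfolding N_def A_def B_def .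
    qed
    finally show ?thesis .
  qed
  have sumd: "(\<Sum>g\<in>G. B g - A g) \<le> real t2 - real t1 + 1"
  proof -
    have e: "{1..t2} = {1..t1-1} \<union> {t1..t2}" using tt' by auto
    have split: "(\<Sum>t\<in>{1..t2}. x p t) = (\<Sum>t\<in>{1..t1-1}. x p t) + (\<Sum>t\<in>{t1..t2}. x p t)" for p
      unfolding e by (rule sum.union_disjoint) auto
    have d: "B g - A g = (\<Sum>p\<in>g. \<Sum>t\<in>{t1..t2}. x p t)" for g
    proof -
      have "B g - A g = (\<Sum>p\<in>g. (\<Sum>t\<in>{1..t2}. x p t) - (\<Sum>t\<in>{1..t1-1}. x p t))"
        unfolding A_def B_def y_cum_def by (rule sum_subtractf[symmetric])
      also have "\<dots> = (\<Sum>p\<in>g. \<Sum>t\<in>{t1..t2}. x p t)"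
        by (rule sum.cong[OF refl]) (simp only: split)
      finally show ?thesis .
    qed
    have "(\<Sum>g\<in>G. B g - A g) = (\<Sum>g\<in>G. \<Sum>p\<in>g. \<Sum>t\<in>{t1..t2}. x p t)"
      by (rule sum.cong[OF refl]) (rule d)
    also have "\<dots> = (\<Sum>p\<in>P. \<Sum>t\<in>{t1..t2}. x p t)"
    proof -
      have fin: "\<forall>g\<in>G. finite g" using GP finP by (meson Union_upper finite_subset)
      have "sum (\<lambda>p. \<Sum>t\<in>{t1..t2}. x p t) (\<Union>G) = (sum \<circ> sum) (\<lambda>p. \<Sum>t\<in>{t1..t2}. x p t) G"
        by (rule sum.Union_disjoint[OF fin disj])
      then show ?thesis unfolding GP by simp
    qed
    also have "\<dots> = (\<Sum>t\<in>{t1..t2}. \<Sum>p\<in>P. x p t)" by (rule sum.swap)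
    also have "\<dots> \<le> (\<Sum>t\<in>{t1..t2}. 1)"
    proof (rule sum_mono)
      fix t assume "t \<in> {t1..t2}"
      then have "t \<in> {1..T}" using tt' by auto
      then show "(\<Sum>p\<in>P. x p t) \<le> 1" using lp(1) by blast
    qed
    also have "\<dots> = real t2 - real t1 + 1" using tt' by (simp add: of_nat_diff)
    finally show ?thesis .
  qed
  interpret U: prob_space U unfolding U_def by (rule prob_space_uniform_measure) simp_all
  interpret M: prob_space M unfolding M_def by (rule prob_space_PiM) (rule U.prob_space_axioms)
  have comp: "{\<alpha> \<in> space M. \<alpha> g \<in> S} \<in> sets M" if g: "g \<in> G" and S: "S \<in> sets borel" for g S
  proof -
    have m: "(\<lambda>\<alpha>. \<alpha> g) \<in> measurable M U" unfolding M_def by (rule measurable_component_singleton[OF g])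
    have "S \<in> sets U" using S unfolding U_def by simp
    from measurable_sets[OF m this] show ?thesis by (simp add: vimage_def Int_def conj_commute)
  qed
  have zmeas: "{\<alpha> \<in> space M. z \<in> sched \<alpha>} \<in> sets M" for z
  proof -
    obtain p t where z: "z = (p, t)" by force
    define G' where "G' = {g \<in> G. p \<in> g \<and> t \<in> {1..T} \<and> x p t > 0}"
    have finG': "finite G'" using finG unfolding G'_def by simp
    have iv: "(y0 < real_of_int k + a \<and> real_of_int k + a \<le> y1) \<longleftrightarrow> a \<in> {y0 - real_of_int k<..y1 - real_of_int k}"
      for y0 y1 a :: real and k :: int by auto
    have eq: "{\<alpha> \<in> space M. z \<in> sched \<alpha>} =
      (\<Union>g\<in>G'. \<Union>k\<in>(UNIV::int set). {\<alpha> \<in> space M. \<alpha> g \<in> {y_cum x g (t - 1) - real_of_int k<..y_cum x g t - real_of_int k}})"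
      unfolding z sched_def tentative_schedule_def G'_def iv by blast
    show ?thesis unfolding eq
    proof (rule sets.finite_UN[OF finG'])
      fix g assume "g \<in> G'"
      then have g: "g \<in> G" unfolding G'_def by simp
      show "(\<Union>k\<in>(UNIV::int set). {\<alpha> \<in> space M. \<alpha> g \<in> {y_cum x g (t - 1) - real_of_int k<..y_cum x g t - real_of_int k}}) \<in> sets M"
        by (rule sets.countable_UN, rule image_subsetI, rule comp[OF g]) simp
    qed
  qed
  define C where "C = P \<times> {t1..t2}"
  have finC: "finite C" unfolding C_def using finP by simp
  have Qeq: "real (Q_temp G x T \<alpha> {t1..t2}) = (\<Sum>z\<in>C. if z \<in> sched \<alpha> then 1 else 0)" for \<alpha>
  proof -
    have "{(p, t) \<in> tentative_schedule G x T \<alpha>. t \<in> {t1..t2}} = C \<inter> sched \<alpha>"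
      unfolding C_def sched_def tentative_schedule_def using GP by fastforce
    then have "real (Q_temp G x T \<alpha> {t1..t2}) = real (card (C \<inter> sched \<alpha>))" unfolding Q_temp_def by simp
    also have "\<dots> = (\<Sum>z\<in>C \<inter> sched \<alpha>. 1)" by simp
    also have "\<dots> = (\<Sum>z\<in>C. if z \<in> sched \<alpha> then 1 else 0)" by (rule sum.inter_restrict[OF finC])
    finally show ?thesis .
  qed
  have Qmeas: "(\<lambda>\<alpha>. real (Q_temp G x T \<alpha> {t1..t2})) \<in> borel_measurable M"
  proof -
    have "(\<lambda>\<alpha>. (\<Sum>z\<in>C. if z \<in> sched \<alpha> then 1 else 0::real)) \<in> borel_measurable M"
    proof (rule borel_measurable_sum)
      fix z show "(\<lambda>\<alpha>. if z \<in> sched \<alpha> then 1 else 0::real) \<in> borel_measurable M"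
        by (rule measurable_If) (simp_all add: zmeas)
    qed
    then show ?thesis unfolding Qeq .
  qed
  have OFmeas[measurable]: "(\<lambda>\<alpha>. OF G x T \<alpha> t1 t2) \<in> borel_measurable M"
    unfolding OF_def using Qmeas by measurable
  have meas: "Ev \<in> sets M"
    using OFmeas unfolding Ev_def borel_measurable_iff_ge by blast
  have T1: "1 \<le> T" using tt' by simp
  have bound: "measure M Ev \<le> 1 / real T ^ 3"
  proof (cases "Lstar = 0")
    case True
    have "\<not> ln (real T) > 0"
    proof
      assume "ln (real T) > 0"
      then have "1 / \<epsilon> ^ 3 * ln (real T) > 0" using eps by simp
      then show False using Lbig True unfolding T_def by simp
    qed
    then have "real T \<le> 1" using T1 by (simp add: ln_le_zero_iff not_less)
    then have "T = 1" using T1 by simp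
    then show ?thesis using M.prob_le_1 by simp
  next
    case False
    then have Lpos: "0 < real Lstar" by simp
    define c where "c = 6 * \<epsilon> * real Lstar"
    have cpos: "0 < c" unfolding c_def using eps Lpos by simp
    have OFbig: "real (Q_temp G x T \<alpha> {t1..t2}) \<ge> real t2 - real t1 + 1 + c" if "\<alpha> \<in> Ev" for \<alpha>
    proof -
      have "c \<le> OF G x T \<alpha> t1 t2" using that unfolding Ev_def c_def by simp
      then show ?thesis using cpos unfolding OF_def by (auto simp: max_def split: if_splits)
    qed
    show ?thesis
    proof (cases "G = {}")
      case True
      have "Ev = {}"
      proof (rule ccontr)
        assume "Ev \<noteq> {}"
        then obtain \<alpha> where "\<alpha> \<in> Ev" by blast
        from OFbig[OF this] Qbound[of \<alpha>] True cpos tt' show False by simp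
      qed
      then show ?thesis by simp
    next
      case Gne: False
      have cardpos: "0 < card G" using Gne finG by (simp add: card_gt_0_iff)
      define X where "X = (\<lambda>g (\<alpha>::'p set \<Rightarrow> real). N g (\<alpha> g))"
      define a where "a = (\<lambda>g. real_of_int \<lfloor>B g - A g\<rfloor>)"
      define b where "b = (\<lambda>g. a g + 1)"
      have Nrange: "N g v \<in> {a g..b g}" for g v
        using floor_diff_bounds[of "B g - v" "A g - v"] unfolding N_def a_def b_def by simp
      have Nmeas: "N g \<in> measurable U borel" for g
        unfolding N_def U_def by measurable
      have compmeas: "(\<lambda>\<alpha>. \<alpha> g) \<in> measurable M U" if "g \<in> G" for g
        unfolding M_def by (rule measurable_component_singleton[OF that])
      have rv: "M.random_variable U (\<lambda>\<alpha>. \<alpha> i)" for i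
      proof (cases "i \<in> G")
        case True then show ?thesis by (rule compmeas)
      next
        case False
        have "(\<lambda>\<alpha>::'p set \<Rightarrow> real. undefined::real) \<in> measurable M U"
          by (rule measurable_const) (simp add: U_def)
        moreover have "\<And>\<alpha>. \<alpha> \<in> space M \<Longrightarrow> \<alpha> i = undefined"
          using False unfolding M_def by (auto simp: space_PiM PiE_def extensional_def)
        ultimately show ?thesis using measurable_cong[of M "\<lambda>\<alpha>. \<alpha> i" "\<lambda>\<alpha>. undefined" U] by metis
      qed
      have indep0: "M.indep_vars (\<lambda>_. U) (\<lambda>g \<alpha>. \<alpha> g) G"
      proof (subst M.indep_vars_iff_distr_eq_PiM[OF Gne rv])
        have "distr M (\<Pi>\<^sub>M i\<in>G. U) (\<lambda>\<alpha>. \<lambda>i\<in>G. \<alpha> i) = distr M M (\<lambda>\<alpha>. \<alpha>)"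
        proof (rule distr_cong)
          show "sets (\<Pi>\<^sub>M i\<in>G. U) = sets M" unfolding M_def by simp
          fix \<alpha> assume "\<alpha> \<in> space M"
          then have "\<alpha> \<in> PiE G (\<lambda>_. space U)" unfolding M_def by (simp add: space_PiM)
          then show "(\<lambda>i\<in>G. \<alpha> i) = \<alpha>" by (simp add: PiE_restrict)
        qed simp
        also have "\<dots> = M" by simp
        also have "M = (\<Pi>\<^sub>M i\<in>G. distr M U (\<lambda>\<alpha>. \<alpha> i))"
          unfolding M_def
          by (rule PiM_cong[OF refl], rule distr_PiM_component[symmetric]) (auto intro: U.prob_space_axioms)
        finally show "distr M (\<Pi>\<^sub>M i\<in>G. U) (\<lambda>\<alpha>. \<lambda>i\<in>G. \<alpha> i) = (\<Pi>\<^sub>M i\<in>G. distr M U (\<lambda>\<alpha>. \<alpha> i))" .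
      qed
      have indep: "M.indep_vars (\<lambda>_. borel) X G"
        unfolding X_def by (rule M.indep_vars_compose2[OF indep0 Nmeas])
      have expX: "M.expectation (X g) = B g - A g" if g: "g \<in> G" for g
      proof -
        have "M.expectation (X g) = integral\<^sup>L (distr M U (\<lambda>\<alpha>. \<alpha> g)) (N g)"
          unfolding X_def by (rule integral_distr[symmetric, OF compmeas[OF g] Nmeas])
        also have "distr M U (\<lambda>\<alpha>. \<alpha> g) = U"
          unfolding M_def by (rule distr_PiM_component) (auto intro: U.prob_space_axioms g)
        also have "integral\<^sup>L U (N g) = B g - A g"
          unfolding U_def N_def by (rule expect_N)
        finally show ?thesis .
      qed
      define \<mu> where "\<mu> = (\<Sum>g\<in>G. M.expectation (X g))"
      interpret H: Hoeffding_ineq M G X a b \<mu>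
        apply unfold_locales
          apply (rule finG)
         apply (rule indep)
        apply (rule AE_I2) apply (simp only: X_def) apply (rule Nrange)
        apply (unfold \<mu>_def) apply (rule reflexive)
        done
      have "\<mu> = (\<Sum>g\<in>G. B g - A g)" unfolding \<mu>_def by (rule sum.cong[OF refl]) (rule expX)
      then have mu: "\<mu> \<le> real t2 - real t1 + 1" using sumd by linarith
      have sq: "(\<Sum>i\<in>G. (b i - a i)\<^sup>2) = real (card G)" unfolding b_def by simp
      have hoef: "measure M {\<alpha> \<in> space M. (\<Sum>i\<in>G. X i \<alpha>) \<ge> \<mu> + c} \<le> exp (-2 * c\<^sup>2 / real (card G))"
        by (rule H.Hoeffding_ineq_ge[of c, unfolded sq]) (use cpos cardpos in auto)
      have Xsum_meas: "(\<lambda>\<alpha>. \<Sum>i\<in>G. X i \<alpha>) \<in> borel_measurable M"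
        by (rule borel_measurable_sum) (rule H.random_variable)
      have setm: "{\<alpha> \<in> space M. (\<Sum>i\<in>G. X i \<alpha>) \<ge> \<mu> + c} \<in> sets M"
        using Xsum_meas unfolding borel_measurable_iff_ge by blast
      have sub: "Ev \<subseteq> {\<alpha> \<in> space M. (\<Sum>i\<in>G. X i \<alpha>) \<ge> \<mu> + c}"
      proof
        fix \<alpha> assume e: "\<alpha> \<in> Ev"
        have "\<mu> + c \<le> real (Q_temp G x T \<alpha> {t1..t2})" using OFbig[OF e] mu by linarith
        also have "\<dots> \<le> (\<Sum>i\<in>G. X i \<alpha>)" using Qbound[of \<alpha>] unfolding X_def .
        finally show "\<alpha> \<in> {\<alpha> \<in> space M. (\<Sum>i\<in>G. X i \<alpha>) \<ge> \<mu> + c}" using e unfolding Ev_def by simp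
      qed
      have "measure M Ev \<le> exp (-2 * c\<^sup>2 / real (card G))"
        using M.finite_measure_mono[OF sub setm] hoef by linarith
      also have "\<dots> \<le> 1 / real T ^ 3"
      proof -
        have lnT: "0 \<le> ln (real T)" using T1 by simp
        have e1: "ln (real T) / \<epsilon> \<le> \<epsilon>\<^sup>2 * real Lstar"
        proof -
          have "\<epsilon>\<^sup>2 * (1 / \<epsilon> ^ 3 * ln (real T)) \<le> \<epsilon>\<^sup>2 * real Lstar"
            by (rule mult_left_mono[OF Lbig[folded T_def]]) simp
          moreover have "\<epsilon>\<^sup>2 * (1 / \<epsilon> ^ 3 * ln (real T)) = ln (real T) / \<epsilon>"
            using eps by (simp add: field_simps power2_eq_square power3_eq_cube)
          ultimately show ?thesis by simp
        qed
        have e2: "ln (real T) \<le> ln (real T) / \<epsilon>"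
          using divide_left_mono[of \<epsilon> 1 "ln (real T)"] eps lnT by simp
        have e3: "2 * c\<^sup>2 / (2 * real Lstar) \<le> 2 * c\<^sup>2 / real (card G)"
          by (rule divide_left_mono) (use cardG cardpos Lpos in auto)
        have e4: "2 * c\<^sup>2 / (2 * real Lstar) = 36 * (\<epsilon>\<^sup>2 * real Lstar)"
          unfolding c_def using Lpos by (simp add: field_simps power2_eq_square)
        have "3 * ln (real T) \<le> 2 * c\<^sup>2 / real (card G)"
          using e1 e2 e3 e4 lnT by linarith
        then have "exp (-2 * c\<^sup>2 / real (card G)) \<le> exp (- (3 * ln (real T)))" by simp
        also have "\<dots> = 1 / real T ^ 3"
        proof -
          have "exp (3 * ln (real T)) = exp (ln (real T)) ^ 3"
            using exp_of_nat_mult[of 3 "ln (real T)"] by simp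
          also have "\<dots> = real T ^ 3" using T1 by simp
          finally show ?thesis by (simp add: exp_minus field_simps)
        qed
        finally show ?thesis .
      qed
      finally show ?thesis .
    qed
  qed
  from meas bound show ?thesis unfolding Let_def Ev_def M_def U_def T_def by (rule conjI)
qed

end
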